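(* Let $n,p\ge1$ and let $\alpha\in\widehat F_{(n,p)}$ be homogeneous of fine degree $\underline{k}$. Assume that each line and each column of $\mathrm{supp}(\underline{k})$ is nonempty. Then $\alpha=0$ unless $\mathrm{supp}(\underline{k})$ satisfies: for all proper subsets $S_1\subset\{1,\dots,n\}$, $S_2\subset\{1,\dots,p\}$ (nonempty with nonempty complements $\bar S_1,\bar S_2$), $\mathrm{supp}(\underline{k})\not\subset(S_1\times S_2)\cup(\bar S_1\times\bar S_2)$.
   Context: Work over a field of characteristic $0$. $F_{(n,p)}$ is the Lie algebra generated by $x_{i,j}$, $(i,j)\in\{1,\dots,n\}\times\{1,\dots,p\}$, with defining relations $[x_{i,j},x_{i',j'}]=0$ whenever $i\ne i'$ and $j\ne j'$; it is graded by the fine degree in $\bigoplus_{(i,j)}\mathbb{N}\epsilon_{(i,j)}$ ($\deg x_{i,j}=\epsilon_{(i,j)}$) and by total degree ($\deg x_{i,j}=1$), and $\widehat F_{(n,p)}$ is its completion for the total degree. For $\underline{k}=\sum k_{(i,j)}\epsilon_{(i,j)}$, $\mathrm{supp}(\underline{k})=\{(i,j)\mid k_{(i,j)}\ne0\}$; the $i$-th column of a set $S$ is $S\cap(\{i\}\times\{1,\dots,p\})$ and the $j$-th line is $S\cap(\{1,\dots,n\}\times\{j\})$. *)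

theory Defs
  imports Main
begin

text \<open>Noncommutative (formal) series over the alphabet of index pairs: words are lists of
  letters (i,j), a series is a coefficient function on words. Elements of the free associative
  algebra are those of finite support; everything below lives there.\<close>

type_synonym 'a nc_series = "(nat \<times> nat) list \<Rightarrow> 'a"

definition nc_mul :: "'a::field nc_series \<Rightarrow> 'a nc_series \<Rightarrow> 'a nc_series" where
  "nc_mul f g = (\<lambda>w. \<Sum>k\<le>length w. f (take k w) * g (drop k w))"

definition nc_br :: "'a::field nc_series \<Rightarrow> 'a nc_series \<Rightarrow> 'a nc_series" where
  "nc_br f g = (\<lambda>w. nc_mul f g w - nc_mul g f w)"

definition gen :: "nat \<Rightarrow> nat \<Rightarrow> 'a::field nc_series" where
  "gen i j = (\<lambda>w. if w = [(i,j)] then 1 else 0)"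

text \<open>The free Lie algebra on the x_{i,j}, realised as the Lie subalgebra of the free
  associative algebra generated by the letters.\<close>
inductive_set free_lie :: "nat \<Rightarrow> nat \<Rightarrow> 'a::field nc_series set"
  for n p :: nat where
  fl_gen: "\<lbrakk>i \<in> {1..n}; j \<in> {1..p}\<rbrakk> \<Longrightarrow> gen i j \<in> free_lie n p"
| fl_zero: "(\<lambda>_. 0) \<in> free_lie n p"
| fl_add: "\<lbrakk>f \<in> free_lie n p; g \<in> free_lie n p\<rbrakk> \<Longrightarrow> (\<lambda>w. f w + g w) \<in> free_lie n p"
| fl_smult: "f \<in> free_lie n p \<Longrightarrow> (\<lambda>w. c * f w) \<in> free_lie n p"
| fl_br: "\<lbrakk>f \<in> free_lie n p; g \<in> free_lie n p\<rbrakk> \<Longrightarrow> nc_br f g \<in> free_lie n p"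

text \<open>The Lie ideal of the free Lie algebra generated by the defining relations of F_(n,p);
  F_(n,p) is the quotient free_lie n p / rel_ideal n p.\<close>
inductive_set rel_ideal :: "nat \<Rightarrow> nat \<Rightarrow> 'a::field nc_series set"
  for n p :: nat where
  ri_rel: "\<lbrakk>i \<in> {1..n}; j \<in> {1..p}; i' \<in> {1..n}; j' \<in> {1..p}; i \<noteq> i'; j \<noteq> j'\<rbrakk>
           \<Longrightarrow> nc_br (gen i j) (gen i' j') \<in> rel_ideal n p"
| ri_zero: "(\<lambda>_. 0) \<in> rel_ideal n p"
| ri_add: "\<lbrakk>f \<in> rel_ideal n p; g \<in> rel_ideal n p\<rbrakk> \<Longrightarrow> (\<lambda>w. f w + g w) \<in> rel_ideal n p"
| ri_smult: "f \<in> rel_ideal n p \<Longrightarrow> (\<lambda>w. c * f w) \<in> rel_ideal n p"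
| ri_brl: "\<lbrakk>l \<in> free_lie n p; f \<in> rel_ideal n p\<rbrakk> \<Longrightarrow> nc_br l f \<in> rel_ideal n p"
| ri_brr: "\<lbrakk>l \<in> free_lie n p; f \<in> rel_ideal n p\<rbrakk> \<Longrightarrow> nc_br f l \<in> rel_ideal n p"

definition fine_homogeneous :: "'a::field nc_series \<Rightarrow> (nat \<times> nat \<Rightarrow> nat) \<Rightarrow> bool" where
  "fine_homogeneous f k \<longleftrightarrow> (\<forall>w. f w \<noteq> 0 \<longrightarrow> (\<forall>a. count_list w a = k a))"

definition fsupp :: "(nat \<times> nat \<Rightarrow> nat) \<Rightarrow> (nat \<times> nat) set" where
  "fsupp k = {a. k a \<noteq> 0}"

end

theory Submission
  imports Defs
begin


lemma nc_mul_Nil[simp]: "nc_mul f g [] = f [] * g []"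
  by (simp add: nc_mul_def)

lemma nc_mul_Cons: "nc_mul f g (x#w) = f [] * g (x#w) + nc_mul (\<lambda>u. f (x#u)) g w"
  unfolding nc_mul_def by (simp add: sum.atMost_Suc_shift del: sum.atMost_Suc)

lemma nc_mul_add_left[simp]: "nc_mul (\<lambda>u. f u + g u) h w = nc_mul f h w + nc_mul g h w"
  by (simp add: nc_mul_def algebra_simps sum.distrib)
lemma nc_mul_add_right[simp]: "nc_mul h (\<lambda>u. f u + g u) w = nc_mul h f w + nc_mul h g w"
  by (simp add: nc_mul_def algebra_simps sum.distrib)
lemma nc_mul_diff_left[simp]: "nc_mul (\<lambda>u. f u - g u) h w = nc_mul f h w - nc_mul g h w"
  by (simp add: nc_mul_def algebra_simps sum_subtractf)
lemma nc_mul_diff_right[simp]: "nc_mul h (\<lambda>u. f u - g u) w = nc_mul h f w - nc_mul h g w"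
  by (simp add: nc_mul_def algebra_simps sum_subtractf)
lemma nc_mul_smult_left[simp]: "nc_mul (\<lambda>u. c * f u) h w = c * nc_mul f h w"
  by (simp add: nc_mul_def algebra_simps sum_distrib_left)
lemma nc_mul_smult_right[simp]: "nc_mul h (\<lambda>u. c * f u) w = c * nc_mul h f w"
  by (simp add: nc_mul_def algebra_simps sum_distrib_left)
lemma nc_mul_zero_left[simp]: "nc_mul (\<lambda>u. 0) h w = 0"
  by (simp add: nc_mul_def)
lemma nc_mul_zero_right[simp]: "nc_mul h (\<lambda>u. 0) w = 0"
  by (simp add: nc_mul_def)

lemma nc_mul_assoc: "nc_mul (nc_mul f g) h w = nc_mul f (nc_mul g h) w"
proof (induction w arbitrary: f)
  case Nil
  then show ?case by simp
next
  case (Cons x w)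
  have e: "(\<lambda>u. nc_mul f g (x#u)) = (\<lambda>u. f [] * g (x#u) + nc_mul (\<lambda>u. f (x#u)) g u)"
    by (simp add: nc_mul_Cons)
  show ?case
    apply (subst nc_mul_Cons)
    apply (subst e)
    apply (simp only: nc_mul_add_left nc_mul_smult_left Cons.IH)
    apply (simp add: nc_mul_Cons algebra_simps)
    done
qed

lemma nc_br_app: "nc_br f g w = nc_mul f g w - nc_mul g f w"
  by (simp add: nc_br_def)

lemma jacobi: "nc_br (nc_br a b) c = (\<lambda>w. nc_br a (nc_br b c) w - nc_br b (nc_br a c) w)"
  by (rule ext) (simp add: nc_br_def nc_mul_assoc algebra_simps)


inductive_set lie_on :: "(nat \<times> nat) set \<Rightarrow> 'a::field nc_series set" for G where
  lo_gen: "(i,j) \<in> G \<Longrightarrow> gen i j \<in> lie_on G"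
| lo_zero: "(\<lambda>_. 0) \<in> lie_on G"
| lo_add: "\<lbrakk>f \<in> lie_on G; g \<in> lie_on G\<rbrakk> \<Longrightarrow> (\<lambda>w. f w + g w) \<in> lie_on G"
| lo_smult: "f \<in> lie_on G \<Longrightarrow> (\<lambda>w. c * f w) \<in> lie_on G"
| lo_br: "\<lbrakk>f \<in> lie_on G; g \<in> lie_on G\<rbrakk> \<Longrightarrow> nc_br f g \<in> lie_on G"

lemma lie_on_mono: "f \<in> lie_on G \<Longrightarrow> G \<subseteq> H \<Longrightarrow> f \<in> lie_on H"
  by (induction rule: lie_on.induct) (auto intro: lie_on.intros)

lemma free_lie_lie_on: "f \<in> free_lie n p \<Longrightarrow> f \<in> lie_on ({1..n} \<times> {1..p})"
  by (induction rule: free_lie.induct) (auto intro: lie_on.intros)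

lemma lie_on_free_lie: "f \<in> lie_on G \<Longrightarrow> G \<subseteq> {1..n} \<times> {1..p} \<Longrightarrow> f \<in> free_lie n p"
  by (induction rule: lie_on.induct) (blast intro: free_lie.intros)+

lemma rel_free_lie: "f \<in> rel_ideal n p \<Longrightarrow> f \<in> free_lie n p"
  by (induction rule: rel_ideal.induct) (blast intro: free_lie.intros)+

lemma ri_neg: "f \<in> rel_ideal n p \<Longrightarrow> (\<lambda>w. - f w) \<in> rel_ideal n p"
  using ri_smult[of f n p "-1"] by simp

lemma ri_diff: "f \<in> rel_ideal n p \<Longrightarrow> g \<in> rel_ideal n p \<Longrightarrow> (\<lambda>w. f w - g w) \<in> rel_ideal n p"
  using ri_add[OF _ ri_neg[of g]] by simp

lemma comm_gen:
  fixes b :: "'a::field nc_series"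
  assumes AB: "\<And>x y. x \<in> A \<Longrightarrow> y \<in> B \<Longrightarrow> nc_br (gen (fst x) (snd x)) (gen (fst y) (snd y)) \<in> (rel_ideal n p :: 'a::field nc_series set)"
    and Bs: "B \<subseteq> {1..n} \<times> {1..p}" and x: "x \<in> A"
  shows "b \<in> lie_on B \<Longrightarrow> nc_br (gen (fst x) (snd x)) b \<in> rel_ideal n p"
proof (induction rule: lie_on.induct)
  case (lo_gen i j)
  then show ?case using AB[OF x, of "(i,j)"] by simp
next
  case lo_zero
  have "nc_br (gen (fst x) (snd x)) (\<lambda>_. 0::'a) = (\<lambda>_. 0)" by (rule ext) (simp add: nc_br_def)
  then show ?case by (simp add: ri_zero)
next
  case (lo_add f g)
  have "nc_br (gen (fst x) (snd x)) (\<lambda>w. f w + g w) = (\<lambda>w. nc_br (gen (fst x) (snd x)) f w + nc_br (gen (fst x) (snd x)) g w)"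
    by (rule ext) (simp add: nc_br_def)
  then show ?case using lo_add by (simp add: ri_add)
next
  case (lo_smult f c)
  have "nc_br (gen (fst x) (snd x)) (\<lambda>w. c * f w) = (\<lambda>w. c * nc_br (gen (fst x) (snd x)) f w)"
    by (rule ext) (simp add: nc_br_def algebra_simps)
  then show ?case using lo_smult by (simp add: ri_smult)
next
  case (lo_br f g)
  have "nc_br (gen (fst x) (snd x)) (nc_br f g) = (\<lambda>w. nc_br (nc_br (gen (fst x) (snd x)) f) g w - nc_br (nc_br (gen (fst x) (snd x)) g) f w)"
    by (rule ext) (simp add: nc_br_def nc_mul_assoc algebra_simps)
  moreover have "f \<in> free_lie n p" "g \<in> free_lie n p"
    using lo_br lie_on_free_lie Bs by blast+
  ultimately show ?case using lo_br by (simp add: ri_diff ri_brr)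
qed

lemma comm_all:
  fixes a :: "'a::field nc_series"
  assumes AB: "\<And>x y. x \<in> A \<Longrightarrow> y \<in> B \<Longrightarrow> nc_br (gen (fst x) (snd x)) (gen (fst y) (snd y)) \<in> (rel_ideal n p :: 'a::field nc_series set)"
    and As: "A \<subseteq> {1..n} \<times> {1..p}" and Bs: "B \<subseteq> {1..n} \<times> {1..p}" and b: "b \<in> lie_on B"
  shows "a \<in> lie_on A \<Longrightarrow> nc_br a b \<in> rel_ideal n p"
proof (induction rule: lie_on.induct)
  case (lo_gen i j)
  then show ?case using comm_gen[OF AB Bs lo_gen b] by simp
next
  case lo_zero
  have "nc_br (\<lambda>_. 0) b = (\<lambda>_. 0)" by (rule ext) (simp add: nc_br_def)
  then show ?case by (simp add: ri_zero)
next
  case (lo_add f g)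
  have "nc_br (\<lambda>w. f w + g w) b = (\<lambda>w. nc_br f b w + nc_br g b w)"
    by (rule ext) (simp add: nc_br_def)
  then show ?case using lo_add by (simp add: ri_add)
next
  case (lo_smult f c)
  have "nc_br (\<lambda>w. c * f w) b = (\<lambda>w. c * nc_br f b w)"
    by (rule ext) (simp add: nc_br_def algebra_simps)
  then show ?case using lo_smult by (simp add: ri_smult)
next
  case (lo_br f g)
  have "nc_br (nc_br f g) b = (\<lambda>w. nc_br f (nc_br g b) w - nc_br g (nc_br f b) w)"
    by (rule jacobi)
  moreover have "f \<in> free_lie n p" "g \<in> free_lie n p"
    using lo_br lie_on_free_lie As by blast+
  ultimately show ?case using lo_br by (simp add: ri_diff ri_brl)
qed

lemma decomp:
  fixes f :: "'a::field nc_series"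
  assumes AB: "\<And>x y. x \<in> A \<Longrightarrow> y \<in> B \<Longrightarrow> nc_br (gen (fst x) (snd x)) (gen (fst y) (snd y)) \<in> (rel_ideal n p :: 'a::field nc_series set)"
    and As: "A \<subseteq> {1..n} \<times> {1..p}" and Bs: "B \<subseteq> {1..n} \<times> {1..p}"
  shows "f \<in> lie_on (A \<union> B) \<Longrightarrow> \<exists>a b r. a \<in> lie_on A \<and> b \<in> lie_on B \<and> r \<in> rel_ideal n p
            \<and> f = (\<lambda>w. a w + b w + r w)"
proof (induction rule: lie_on.induct)
  case (lo_gen i j)
  then show ?case
  proof
    assume "(i,j) \<in> A"
    note h = this show ?thesis
      apply (rule exI[of _ "gen i j"], rule exI[of _ "\<lambda>_. 0"], rule exI[of _ "\<lambda>_. 0"]) using h by (auto intro: lie_on.intros ri_zero)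
  next
    assume "(i,j) \<in> B"
    note h = this show ?thesis
      apply (rule exI[of _ "\<lambda>_. 0"], rule exI[of _ "gen i j"], rule exI[of _ "\<lambda>_. 0"]) using h by (auto intro: lie_on.intros ri_zero)
  qed
next
  case lo_zero
  then show ?case
    by (rule exI[of _ "\<lambda>_. 0"], rule exI[of _ "\<lambda>_. 0"], rule exI[of _ "\<lambda>_. 0"]) (auto intro: lie_on.intros ri_zero)
next
  case (lo_add f g)
  then obtain a b r a' b' r' where h: "a \<in> lie_on A" "b \<in> lie_on B" "r \<in> rel_ideal n p" "f = (\<lambda>w. a w + b w + r w)"
     "a' \<in> lie_on A" "b' \<in> lie_on B" "r' \<in> rel_ideal n p" "g = (\<lambda>w. a' w + b' w + r' w)" by blast
  show ?case
    apply (rule exI[of _ "\<lambda>w. a w + a' w"], rule exI[of _ "\<lambda>w. b w + b' w"], rule exI[of _ "\<lambda>w. r w + r' w"])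
    using h by (auto intro: lie_on.intros ri_add)
next
  case (lo_smult f c)
  then obtain a b r where h: "a \<in> lie_on A" "b \<in> lie_on B" "r \<in> rel_ideal n p" "f = (\<lambda>w. a w + b w + r w)" by blast
  show ?case
    apply (rule exI[of _ "\<lambda>w. c * a w"], rule exI[of _ "\<lambda>w. c * b w"], rule exI[of _ "\<lambda>w. c * r w"])
    using h by (auto intro: lie_on.intros ri_smult simp: algebra_simps)
next
  case (lo_br f g)
  then obtain a b r a' b' r' where h: "a \<in> lie_on A" "b \<in> lie_on B" "r \<in> rel_ideal n p" "f = (\<lambda>w. a w + b w + r w)"
     "a' \<in> lie_on A" "b' \<in> lie_on B" "r' \<in> rel_ideal n p" "g = (\<lambda>w. a' w + b' w + r' w)" by blast
  have ABs: "A \<union> B \<subseteq> {1..n} \<times> {1..p}" using As Bs by blast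
  have fl: "a \<in> free_lie n p" "b \<in> free_lie n p" "g \<in> free_lie n p"
    using h lo_br lie_on_free_lie As Bs ABs by blast+
  have c1: "nc_br a b' \<in> rel_ideal n p" using comm_all[OF AB As Bs] h by blast
  have c2: "(\<lambda>w. - nc_br a' b w) \<in> rel_ideal n p" using comm_all[OF AB As Bs] h ri_neg by blast
  have c3: "nc_br a r' \<in> rel_ideal n p" "nc_br b r' \<in> rel_ideal n p" "nc_br r g \<in> rel_ideal n p"
    using fl h ri_brl ri_brr by blast+
  define R where "R = (\<lambda>w. nc_br a b' w + ((\<lambda>w. - nc_br a' b w) w + (nc_br a r' w + (nc_br b r' w + nc_br r g w))))"
  have R: "R \<in> rel_ideal n p" unfolding R_def using c1 c2 c3 by (intro ri_add) 
  have "nc_br f g = (\<lambda>w. nc_br a a' w + nc_br b b' w + R w)"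
    unfolding R_def h(4) by (rule ext) (simp add: nc_br_def h(8) algebra_simps)
  then show ?case using R h by (blast intro: lie_on.intros)
qed


definition proj :: "(nat \<times> nat \<Rightarrow> nat) \<Rightarrow> 'a::field nc_series \<Rightarrow> 'a nc_series" where
  "proj k f = (\<lambda>w. if count_list w = k then f w else 0)"

lemma hom_iff: "fine_homogeneous f k \<longleftrightarrow> (\<forall>w. f w \<noteq> 0 \<longrightarrow> count_list w = k)"
  unfolding fine_homogeneous_def by (auto simp: fun_eq_iff)

lemma hom_proj: "fine_homogeneous f k' \<Longrightarrow> proj k f = (if k = k' then f else (\<lambda>_. 0))"
  unfolding hom_iff proj_def by (auto simp: fun_eq_iff)

lemma hom_gen: "fine_homogeneous (gen i j) (count_list [(i,j)])"
  unfolding hom_iff gen_def by auto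

lemma hom_mul:
  assumes "fine_homogeneous f k1" "fine_homogeneous g k2"
  shows "fine_homogeneous (nc_mul f g) (\<lambda>a. k1 a + k2 a)"
  unfolding hom_iff
proof (intro allI impI)
  fix w assume "nc_mul f g w \<noteq> 0"
  then obtain i where "f (take i w) * g (drop i w) \<noteq> 0"
    unfolding nc_mul_def by (meson sum.not_neutral_contains_not_neutral)
  then have "count_list (take i w) = k1" "count_list (drop i w) = k2"
    using assms unfolding hom_iff by auto
  moreover have "count_list w a = count_list (take i w) a + count_list (drop i w) a" for a
    by (metis append_take_drop_id count_list_append)
  ultimately show "count_list w = (\<lambda>a. k1 a + k2 a)" by auto
qed

lemma hom_br:
  assumes "fine_homogeneous f k1" "fine_homogeneous g k2"
  shows "fine_homogeneous (nc_br f g) (\<lambda>a. k1 a + k2 a)"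
proof -
  have "fine_homogeneous (nc_mul f g) (\<lambda>a. k1 a + k2 a)" "fine_homogeneous (nc_mul g f) (\<lambda>a. k1 a + k2 a)"
    using hom_mul[OF assms] hom_mul[OF assms(2,1)] by (auto simp: add.commute)
  then show ?thesis unfolding hom_iff nc_br_def by (metis diff_self)
qed

lemma finite_count: "finite (fsupp (count_list w))"
  unfolding fsupp_def by (rule finite_subset[of _ "set w"]) (auto simp: count_list_0_iff)

lemma proj_inf: "\<not> finite (fsupp k) \<Longrightarrow> proj k f = (\<lambda>_. 0)"
  unfolding proj_def by (rule ext) (metis finite_count)

definition K :: "(nat \<times> nat \<Rightarrow> nat) \<Rightarrow> (nat \<times> nat \<Rightarrow> nat) set" where
  "K k = {k1. \<forall>a. k1 a \<le> k a}"

lemma finite_K: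
  assumes "finite (fsupp k)" shows "finite (K k)"
proof -
  have "K k \<subseteq> {f. \<forall>x. (x \<in> fsupp k \<longrightarrow> f x \<in> {0..Max (k ` fsupp k)}) \<and> (x \<notin> fsupp k \<longrightarrow> f x = 0)}"
  proof (intro subsetI CollectI allI conjI impI)
    fix f x assume f: "f \<in> K k"
    then have le: "f x \<le> k x" unfolding K_def by blast
    { assume "x \<in> fsupp k"
      then have "k x \<le> Max (k ` fsupp k)" using assms by (intro Max_ge) auto
      then show "f x \<in> {0..Max (k ` fsupp k)}" using le by auto }
    { assume "x \<notin> fsupp k" then show "f x = 0" using le unfolding fsupp_def by auto }
  qed
  then show ?thesis
    by (rule finite_subset) (intro finite_set_of_finite_funs assms, simp)
qed

lemma proj_mul:
  assumes fin: "finite (fsupp k)"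
  shows "proj k (nc_mul f g) w = (\<Sum>k1\<in>K k. nc_mul (proj k1 f) (proj (\<lambda>a. k a - k1 a) g) w)"
proof -
  have split: "count_list w a = count_list (take i w) a + count_list (drop i w) a" for i a
    by (metis append_take_drop_id count_list_append)
  have "(\<Sum>k1\<in>K k. nc_mul (proj k1 f) (proj (\<lambda>a. k a - k1 a) g) w)
     = (\<Sum>i\<le>length w. \<Sum>k1\<in>K k. proj k1 f (take i w) * proj (\<lambda>a. k a - k1 a) g (drop i w))"
    unfolding nc_mul_def by (rule sum.swap)
  also have "\<dots> = (\<Sum>i\<le>length w. if count_list w = k then f (take i w) * g (drop i w) else 0)"
  proof (rule sum.cong[OF refl])
    fix i
    show "(\<Sum>k1\<in>K k. proj k1 f (take i w) * proj (\<lambda>a. k a - k1 a) g (drop i w))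
        = (if count_list w = k then f (take i w) * g (drop i w) else 0)"
    proof (cases "count_list w = k")
      case True
      have "(\<Sum>k1\<in>K k. proj k1 f (take i w) * proj (\<lambda>a. k a - k1 a) g (drop i w))
          = (\<Sum>k1\<in>K k. if count_list (take i w) = k1 then f (take i w) * g (drop i w) else 0)"
      proof (rule sum.cong[OF refl])
        fix k1 assume "k1 \<in> K k"
        show "proj k1 f (take i w) * proj (\<lambda>a. k a - k1 a) g (drop i w)
            = (if count_list (take i w) = k1 then f (take i w) * g (drop i w) else 0)"
        proof -
          have d: "count_list (drop i w) a = k a - count_list (take i w) a" for a
            using True split[of a i] by simp
          have "count_list (take i w) = k1 \<Longrightarrow> count_list (drop i w) = (\<lambda>a. k a - k1 a)"
            using d by auto
          then show ?thesis unfolding proj_def by auto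
        qed
      qed
      also have "\<dots> = f (take i w) * g (drop i w)"
        using sum.delta[OF finite_K[OF fin], of "count_list (take i w)" "\<lambda>_. f (take i w) * g (drop i w)"]
          True split[of _ i] unfolding K_def by (auto simp: eq_commute)
      finally show ?thesis using True by simp
    next
      case False
      have "proj k1 f (take i w) * proj (\<lambda>a. k a - k1 a) g (drop i w) = 0" if "k1 \<in> K k" for k1
      proof (rule ccontr)
        assume "proj k1 f (take i w) * proj (\<lambda>a. k a - k1 a) g (drop i w) \<noteq> 0"
        then have "count_list (take i w) = k1" "count_list (drop i w) = (\<lambda>a. k a - k1 a)"
          unfolding proj_def by (auto split: if_splits)
        then have "count_list w = k" using that split[of _ i] unfolding K_def
          by (auto simp: fun_eq_iff)
        then show False using False by simp
      qed
      then have "(\<Sum>k1\<in>K k. proj k1 f (take i w) * proj (\<lambda>a. k a - k1 a) g (drop i w)) = 0"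
        by (intro sum.neutral) blast
      then show ?thesis using False by simp
    qed
  qed
  also have "\<dots> = proj k (nc_mul f g) w"
    unfolding proj_def nc_mul_def by simp
  finally show ?thesis by simp
qed

lemma K_inv: "k1 \<in> K k \<Longrightarrow> (\<lambda>a. k a - (k a - k1 a)) = k1"
proof (rule ext)
  fix x assume "k1 \<in> K k"
  then have "k1 x \<le> k x" unfolding K_def by blast
  then show "k x - (k x - k1 x) = k1 x" by simp
qed

lemma K_diff: "k1 \<in> K k \<Longrightarrow> (\<lambda>a. k a - k1 a) \<in> K k"
  unfolding K_def by simp

lemma K_reindex:
  "(\<Sum>k1\<in>K k. F k1) = (\<Sum>k1\<in>K k. F (\<lambda>a. k a - k1 a))"
  apply (rule sum.reindex_bij_witness[of _ "\<lambda>k1 a. k a - k1 a" "\<lambda>k1 a. k a - k1 a"])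
  using K_inv K_diff by auto

lemma proj_br:
  assumes fin: "finite (fsupp k)"
  shows "proj k (nc_br f g) = (\<lambda>w. \<Sum>k1\<in>K k. nc_br (proj k1 f) (proj (\<lambda>a. k a - k1 a) g) w)"
proof (rule ext)
  fix w
  have e1: "proj k (nc_br f g) w = proj k (nc_mul f g) w - proj k (nc_mul g f) w"
    unfolding proj_def nc_br_def by simp
  have e2: "proj k (nc_mul g f) w = (\<Sum>k1\<in>K k. nc_mul (proj (\<lambda>a. k a - k1 a) g) (proj k1 f) w)"
  proof -
    have "(\<Sum>k1\<in>K k. nc_mul (proj k1 g) (proj (\<lambda>a. k a - k1 a) f) w)
       = (\<Sum>k1\<in>K k. nc_mul (proj (\<lambda>a. k a - k1 a) g) (proj (\<lambda>a. k a - (k a - k1 a)) f) w)"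
      by (rule K_reindex[where F = "\<lambda>k1. nc_mul (proj k1 g) (proj (\<lambda>a. k a - k1 a) f) w"])
    also have "\<dots> = (\<Sum>k1\<in>K k. nc_mul (proj (\<lambda>a. k a - k1 a) g) (proj k1 f) w)"
      by (rule sum.cong[OF refl]) (simp add: K_inv)
    finally show ?thesis unfolding proj_mul[OF fin] .
  qed
  show "proj k (nc_br f g) w = (\<Sum>k1\<in>K k. nc_br (proj k1 f) (proj (\<lambda>a. k a - k1 a) g) w)"
    unfolding e1 unfolding e2 unfolding proj_mul[OF fin] by (simp add: nc_br_app sum_subtractf)
qed

lemma sum_closed:
  assumes "(\<lambda>_. 0) \<in> S" "\<And>f g. f \<in> S \<Longrightarrow> g \<in> S \<Longrightarrow> (\<lambda>w. f w + g w) \<in> S"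
  shows "finite A \<Longrightarrow> (\<forall>x\<in>A. F x \<in> S) \<Longrightarrow> (\<lambda>w. \<Sum>x\<in>A. F x w) \<in> S"
proof (induction A rule: finite_induct)
  case empty
  then show ?case using assms(1) by simp
next
  case (insert x A)
  then have "(\<lambda>w. F x w + (\<lambda>w. \<Sum>x\<in>A. F x w) w) \<in> S" using assms(2) by simp
  then show ?case using insert by simp
qed

lemma proj_lie_on:
  "f \<in> lie_on G \<Longrightarrow> proj k f \<in> lie_on {a \<in> G. k a \<noteq> 0}"
proof (induction arbitrary: k rule: lie_on.induct)
  case (lo_gen i j)
  show ?case
  proof (cases "k = count_list [(i,j)]")
    case True
    have "proj k (gen i j) = gen i j" using hom_proj[OF hom_gen, of k i j] True by simp
    moreover have "(i,j) \<in> {a \<in> G. k a \<noteq> 0}" using True lo_gen by simp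
    ultimately show ?thesis by (metis lie_on.lo_gen)
  qed (simp add: hom_proj[OF hom_gen] lie_on.intros)
next
  case lo_zero
  then show ?case by (simp add: proj_def lie_on.intros)
next
  case (lo_add f g)
  have "proj k (\<lambda>w. f w + g w) = (\<lambda>w. proj k f w + proj k g w)" by (auto simp: proj_def)
  then show ?case using lo_add by (simp add: lie_on.intros)
next
  case (lo_smult f c)
  have "proj k (\<lambda>w. c * f w) = (\<lambda>w. c * proj k f w)" by (auto simp: proj_def)
  then show ?case using lo_smult by (simp add: lie_on.intros)
next
  case (lo_br f g)
  show ?case
  proof (cases "finite (fsupp k)")
    case False
    then show ?thesis by (simp add: proj_inf lie_on.intros)
  next
    case True
    have all: "\<forall>k1\<in>K k. nc_br (proj k1 f) (proj (\<lambda>a. k a - k1 a) g) \<in> lie_on {a \<in> G. k a \<noteq> 0}"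
    proof (intro ballI lie_on.lo_br)
      fix k1 assume "k1 \<in> K k"
      then show "proj k1 f \<in> lie_on {a \<in> G. k a \<noteq> 0}" "proj (\<lambda>a. k a - k1 a) g \<in> lie_on {a \<in> G. k a \<noteq> 0}"
      proof -
        have le: "k1 a \<le> k a" for a using \<open>k1 \<in> K k\<close> unfolding K_def by blast
        have s1: "{a \<in> G. k1 a \<noteq> 0} \<subseteq> {a \<in> G. k a \<noteq> 0}"
        proof
          fix a assume "a \<in> {a \<in> G. k1 a \<noteq> 0}" then show "a \<in> {a \<in> G. k a \<noteq> 0}" using le[of a] by auto
        qed
        have s2: "{a \<in> G. k a - k1 a \<noteq> 0} \<subseteq> {a \<in> G. k a \<noteq> 0}" by auto
        show "proj k1 f \<in> lie_on {a \<in> G. k a \<noteq> 0}" by (rule lie_on_mono[OF lo_br.IH(1) s1])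
        show "proj (\<lambda>a. k a - k1 a) g \<in> lie_on {a \<in> G. k a \<noteq> 0}" by (rule lie_on_mono[OF lo_br.IH(2) s2])
      qed
    qed
    show ?thesis unfolding proj_br[OF True]
      by (rule sum_closed[OF lie_on.lo_zero lie_on.lo_add finite_K[OF True] all])
  qed
qed

lemma proj_free_lie: "f \<in> free_lie n p \<Longrightarrow> proj k f \<in> free_lie n p"
  by (drule free_lie_lie_on, drule proj_lie_on[of _ _ k]) (erule lie_on_free_lie, auto)

lemma proj_rel: "f \<in> rel_ideal n p \<Longrightarrow> proj k f \<in> rel_ideal n p"
proof (induction arbitrary: k rule: rel_ideal.induct)
  case (ri_rel i j i' j')
  define k' where "k' = (\<lambda>a. count_list [(i,j)] a + count_list [(i',j')] a)"
  have h: "fine_homogeneous (nc_br (gen i j) (gen i' j')) k'"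
    unfolding k'_def by (rule hom_br[OF hom_gen hom_gen])
  have "nc_br (gen i j) (gen i' j') \<in> rel_ideal n p" using ri_rel by (blast intro: rel_ideal.ri_rel)
  then show ?case unfolding hom_proj[OF h] by (auto intro: rel_ideal.ri_zero)
next
  case ri_zero
  then show ?case by (simp add: proj_def rel_ideal.intros)
next
  case (ri_add f g)
  have "proj k (\<lambda>w. f w + g w) = (\<lambda>w. proj k f w + proj k g w)" by (auto simp: proj_def)
  then show ?case using ri_add by (simp add: rel_ideal.intros)
next
  case (ri_smult f c)
  have "proj k (\<lambda>w. c * f w) = (\<lambda>w. c * proj k f w)" by (auto simp: proj_def)
  then show ?case using ri_smult by (simp add: rel_ideal.intros)
next
  case (ri_brl l f)
  show ?case
  proof (cases "finite (fsupp k)")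
    case False
    then show ?thesis by (simp add: proj_inf rel_ideal.intros)
  next
    case True
    show ?thesis unfolding proj_br[OF True]
      by (rule sum_closed[OF rel_ideal.ri_zero rel_ideal.ri_add finite_K[OF True]])
         (auto intro!: rel_ideal.ri_brl proj_free_lie ri_brl)
  qed
next
  case (ri_brr l f)
  show ?case
  proof (cases "finite (fsupp k)")
    case False
    then show ?thesis by (simp add: proj_inf rel_ideal.intros)
  next
    case True
    show ?thesis unfolding proj_br[OF True]
      by (rule sum_closed[OF rel_ideal.ri_zero rel_ideal.ri_add finite_K[OF True]])
         (auto intro!: rel_ideal.ri_brr proj_free_lie ri_brr)
  qed
qed

lemma vanish: "f \<in> lie_on G \<Longrightarrow> x \<in> set w \<Longrightarrow> x \<notin> G \<Longrightarrow> f w = 0"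
proof (induction arbitrary: w rule: lie_on.induct)
  case (lo_gen i j)
  then show ?case by (auto simp: gen_def)
next
  case (lo_br f g)
  have "nc_mul f g w = 0" "nc_mul g f w = 0"
    unfolding nc_mul_def using lo_br
    by (auto intro!: sum.neutral) (metis append_take_drop_id Un_iff set_append)+
  then show ?case by (simp add: nc_br_def)
qed auto

theorem lemma1p7:
  fixes n p :: nat and k :: "nat \<times> nat \<Rightarrow> nat" and \<alpha> :: "'a::field_char_0 nc_series"
  assumes "n \<ge> 1" and "p \<ge> 1"
    and "fsupp k \<subseteq> {1..n} \<times> {1..p}"
    and "\<alpha> \<in> free_lie n p"
    and "fine_homogeneous \<alpha> k"
    and "\<forall>i\<in>{1..n}. \<exists>j\<in>{1..p}. (i, j) \<in> fsupp k"
    and "\<forall>j\<in>{1..p}. \<exists>i\<in>{1..n}. (i, j) \<in> fsupp k"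
    and "\<not> (\<forall>S1 S2. S1 \<subset> {1..n} \<and> S1 \<noteq> {} \<and> S2 \<subset> {1..p} \<and> S2 \<noteq> {} \<longrightarrow>
            \<not> fsupp k \<subseteq> (S1 \<times> S2) \<union> (({1..n} - S1) \<times> ({1..p} - S2)))"
  shows "\<alpha> \<in> rel_ideal n p"
proof -
  obtain S1 S2 where S: "S1 \<subset> {1..n}" "S1 \<noteq> {}" "S2 \<subset> {1..p}" "S2 \<noteq> {}"
    and sub: "fsupp k \<subseteq> (S1 \<times> S2) \<union> (({1..n} - S1) \<times> ({1..p} - S2))"
    using assms(8) by blast
  define A where "A = fsupp k \<inter> (S1 \<times> S2)"
  define B where "B = fsupp k \<inter> (({1..n} - S1) \<times> ({1..p} - S2))"
  have As: "A \<subseteq> {1..n} \<times> {1..p}" and Bs: "B \<subseteq> {1..n} \<times> {1..p}"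
    using assms(3) unfolding A_def B_def by auto
  have AB: "nc_br (gen (fst x) (snd x)) (gen (fst y) (snd y)) \<in> (rel_ideal n p :: 'a nc_series set)"
    if "x \<in> A" "y \<in> B" for x y
  proof -
    obtain i j i' j' where x: "x = (i,j)" and y: "y = (i',j')" by fastforce
    have "i \<in> S1" "j \<in> S2" "i' \<notin> S1" "j' \<notin> S2" "(i,j) \<in> {1..n} \<times> {1..p}" "(i',j') \<in> {1..n} \<times> {1..p}"
      using that x y As Bs unfolding A_def B_def by auto
    then have "i \<noteq> i'" "j \<noteq> j'" "i \<in> {1..n}" "j \<in> {1..p}" "i' \<in> {1..n}" "j' \<in> {1..p}" by auto
    then show ?thesis using x y by (simp add: ri_rel)
  qed
  obtain i where i: "i \<in> S1" using S(2) by blast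
  then have "i \<in> {1..n}" using S(1) by blast
  then obtain j where "(i,j) \<in> fsupp k" using assms(6) by blast
  then have xA: "(i,j) \<in> A" using sub i unfolding A_def by blast
  obtain i' where i': "i' \<in> {1..n}" "i' \<notin> S1" using S(1) by blast
  then obtain j' where "(i',j') \<in> fsupp k" using assms(6) by blast
  then have yB: "(i',j') \<in> B" using sub i' unfolding B_def by blast
  have hom: "proj k \<alpha> = \<alpha>" using hom_proj[OF assms(5), of k] by simp
  have "proj k \<alpha> \<in> lie_on {a \<in> {1..n} \<times> {1..p}. k a \<noteq> 0}"
    by (rule proj_lie_on[OF free_lie_lie_on[OF assms(4)]])
  then have "\<alpha> \<in> lie_on (A \<union> B)" unfolding hom
    by (rule lie_on_mono) (use sub in \<open>auto simp: A_def B_def fsupp_def\<close>)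
  then obtain a b r where abr: "a \<in> lie_on A" "b \<in> lie_on B" "r \<in> rel_ideal n p"
    and eq: "\<alpha> = (\<lambda>w. a w + b w + r w)"
    using decomp[OF AB As Bs] by blast
  have "\<alpha> = proj k r"
  proof (rule ext)
    fix w
    show "\<alpha> w = proj k r w"
    proof (cases "count_list w = k")
      case True
      have "k (i',j') \<noteq> 0" "k (i,j) \<noteq> 0" using xA yB unfolding A_def B_def fsupp_def by auto
      then have "(i',j') \<in> set w" "(i,j) \<in> set w" using True by (metis count_list_0_iff)+
      moreover have "(i',j') \<notin> A" "(i,j) \<notin> B" using i' i unfolding A_def B_def by auto
      ultimately have "a w = 0" "b w = 0" using vanish abr by blast+
      then show ?thesis using True eq by (simp add: proj_def)
    next
      case False
      then show ?thesis using assms(5) unfolding hom_iff proj_def by auto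
    qed
  qed
  then show ?thesis using proj_rel[OF abr(3)] by simp
qed

end
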